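(* In the setting of the context, let $V$ be the exact output covariance matrix and $V_a$ the block-diagonal approximate covariance matrix. Then $$\|V-V_a\|^2\le e^{4r}N^4\big(\eta+2\sqrt{\eta}\big)^2,$$ where $\|\cdot\|$ is the Frobenius norm and $\eta=\max_\alpha\eta_\alpha$.
   Context: $M$ modes partitioned into $N$ disjoint sublattices $\mathcal L_1,\dots,\mathcal L_N$ (each of $M/N$ modes), each containing exactly one source mode $s_\alpha$. A passive linear-optical circuit with $M\times M$ unitary $U$ ($\hat a_j\mapsto\sum_kU_{jk}\hat a_k$) has real orthogonal symplectic representation $O$. Covariance conventions: $\hat x_j=(\hat a_j+\hat a_j^\dagger)/\sqrt2$, $\hat p_j=i(\hat a_j^\dagger-\hat a_j)/\sqrt2$, $V_{jk}=\tfrac12\mathrm{Tr}[\hat\rho\{\hat Q_j,\hat Q_k\}]$ with $\hat Q=(\hat x_1,\hat p_1,\dots,\hat x_M,\hat p_M)$, vacuum $=\mathbb 1/2$. Input: each source mode is a squeezed vacuum with parameter $r>0$ (covariance block $\tfrac12\mathrm{diag}(e^{2r},e^{-2r})$), all other modes vacuum; $V_{\mathrm{in}}$ is its covariance and $V=OV_{\mathrm{in}}O^T$. For each $\alpha$, let $V^{(\alpha)}_{\mathrm{in}}$ be the covariance with only $s_\alpha$ squeezed and all other modes vacuum, and let $v'_\alpha$ be the restriction of $OV^{(\alpha)}_{\mathrm{in}}O^T$ to the quadratures of modes in $\mathcal L_\alpha$. $V_a$ is the block-diagonal matrix (with respect to the sublattice partition) with diagonal blocks $v'_1,\dots,v'_N$,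 i.e. the covariance of the product state $\bigotimes_\alpha\hat\rho_\alpha$. The leakage rate of source $\alpha$ is $\eta_\alpha=\sum_{j\notin\mathcal L_\alpha}|U_{j,s_\alpha}|^2$. *)

theory Defs
  imports Complex_Main
begin

(* Matrices are functions nat => nat => _ with explicit bounds.
   Quadrature index convention (0-based): quadrature 2*j is x_j, 2*j+1 is p_j,
   for modes j < M. *)

definition unitary_mat :: "nat \<Rightarrow> (nat \<Rightarrow> nat \<Rightarrow> complex) \<Rightarrow> bool" where
  "unitary_mat M U \<longleftrightarrow>
     (\<forall>j<M. \<forall>l<M. (\<Sum>k<M. U j k * cnj (U l k)) = (if j = l then 1 else 0))"

(* real orthogonal symplectic representation O of the mode map a_j -> sum_k U_jk a_k,
   with x = (a + a^dag)/sqrt 2, p = i(a^dag - a)/sqrt 2: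
   x_j -> sum_k (Re U_jk x_k - Im U_jk p_k),  p_j -> sum_k (Im U_jk x_k + Re U_jk p_k) *)
definition realrep :: "(nat \<Rightarrow> nat \<Rightarrow> complex) \<Rightarrow> nat \<Rightarrow> nat \<Rightarrow> real" where
  "realrep U q q' =
     (let u = U (q div 2) (q' div 2) in
      if even q \<and> even q' then Re u
      else if even q \<and> odd q' then - Im u
      else if odd q \<and> even q' then Im u
      else Re u)"

definition cov_transform :: "nat \<Rightarrow> (nat \<Rightarrow> nat \<Rightarrow> real) \<Rightarrow> (nat \<Rightarrow> nat \<Rightarrow> real) \<Rightarrow> nat \<Rightarrow> nat \<Rightarrow> real" where
  "cov_transform M R V q q' = (\<Sum>a<2*M. \<Sum>b<2*M. R q a * V a b * R q' b)"

(* input covariance: modes in S are squeezed vacua with parameter r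
   (block 1/2 diag(e^{2r}, e^{-2r})), all other modes vacuum (1/2 identity) *)
definition sq_input :: "nat set \<Rightarrow> real \<Rightarrow> nat \<Rightarrow> nat \<Rightarrow> real" where
  "sq_input S r q q' =
     (if q = q' then
        (if q div 2 \<in> S then (if even q then exp (2*r) / 2 else exp (-2*r) / 2) else 1/2)
      else 0)"

definition exact_cov :: "nat \<Rightarrow> nat \<Rightarrow> (nat \<Rightarrow> nat) \<Rightarrow> real \<Rightarrow> (nat \<Rightarrow> nat \<Rightarrow> complex) \<Rightarrow> nat \<Rightarrow> nat \<Rightarrow> real" where
  "exact_cov M N s r U = cov_transform M (realrep U) (sq_input (s ` {..<N}) r)"

(* block-diagonal approximation V_a: block alpha is the restriction to L_alpha of
   O V_in^(alpha) O^T; off-diagonal blocks are zero. lat j is the sublattice of mode j. *)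
definition approx_cov :: "nat \<Rightarrow> (nat \<Rightarrow> nat) \<Rightarrow> (nat \<Rightarrow> nat) \<Rightarrow> real \<Rightarrow> (nat \<Rightarrow> nat \<Rightarrow> complex) \<Rightarrow> nat \<Rightarrow> nat \<Rightarrow> real" where
  "approx_cov M lat s r U q q' =
     (if lat (q div 2) = lat (q' div 2)
      then cov_transform M (realrep U) (sq_input {s (lat (q div 2))} r) q q'
      else 0)"

definition leakage :: "nat \<Rightarrow> (nat \<Rightarrow> nat) \<Rightarrow> (nat \<Rightarrow> nat) \<Rightarrow> (nat \<Rightarrow> nat \<Rightarrow> complex) \<Rightarrow> nat \<Rightarrow> real" where
  "leakage M lat s U \<alpha> = (\<Sum>j | j < M \<and> lat j \<noteq> \<alpha>. (cmod (U j (s \<alpha>)))^2)"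

definition frob_sq :: "nat \<Rightarrow> (nat \<Rightarrow> nat \<Rightarrow> real) \<Rightarrow> real" where
  "frob_sq M A = (\<Sum>q<2*M. \<Sum>q'<2*M. (A q q')^2)"

end

theory Submission
  imports Defs "HOL-Analysis.Convex"
begin

lemma sum_split2: "(\<Sum>a<2*(M::nat). (f::nat\<Rightarrow>real) a) = (\<Sum>k<M. f (2*k) + f (2*k+1))"
  by (induction M) (simp_all add: algebra_simps)

lemma bessel:
  assumes U: "unitary_mat M U" and s: "s < M"
  shows "(\<Sum>j<M. (cmod (U j s))^2) \<le> 1"
proof -
  define c where "c j = U j s" for j
  define w where "w k = (if k = s then 1 else 0) - (\<Sum>j<M. cnj (c j) * U j k)" for k
  have cw: "cnj (w k) = (if k = s then 1 else 0) - (\<Sum>l<M. c l * cnj (U l k))" for k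
    by (simp add: w_def)
  have S0: "(\<Sum>k<M. U j k * cnj (w k)) = 0" if "j < M" for j
  proof -
    have "(\<Sum>k<M. U j k * cnj (w k)) = (\<Sum>k<M. U j k * (if k = s then 1 else 0)) - (\<Sum>k<M. \<Sum>l<M. c l * (U j k * cnj (U l k)))"
      unfolding cw by (simp add: right_diff_distrib sum_subtractf sum_distrib_left mult.left_commute)
    also have "(\<Sum>k<M. \<Sum>l<M. c l * (U j k * cnj (U l k))) = (\<Sum>l<M. c l * (\<Sum>k<M. U j k * cnj (U l k)))"
      by (subst sum.swap) (simp add: sum_distrib_left)
    also have "(\<Sum>k<M. U j k * (if k = s then 1 else 0)) = c j"
      using s by (simp add: c_def if_distrib[of "(*) (U j _)"] cong: if_cong)
    also have "(\<Sum>l<M. c l * (\<Sum>k<M. U j k * cnj (U l k))) = (\<Sum>l<M. (if j = l then c l else 0))"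
      using U that unfolding unitary_mat_def by (intro sum.cong) auto
    also have "c j - \<dots> = 0" using that by simp
    finally show ?thesis .
  qed
  have "(\<Sum>k<M. w k * cnj (w k)) = (\<Sum>k<M. (if k = s then 1 else 0) * cnj (w k)) - (\<Sum>k<M. \<Sum>j<M. cnj (c j) * (U j k * cnj (w k)))"
    unfolding w_def[of k for k] by (simp add: left_diff_distrib sum_subtractf sum_distrib_right mult.assoc)
  also have "(\<Sum>k<M. \<Sum>j<M. cnj (c j) * (U j k * cnj (w k))) = (\<Sum>j<M. cnj (c j) * (\<Sum>k<M. U j k * cnj (w k)))"
    by (subst sum.swap) (simp add: sum_distrib_left)
  also have "\<dots> = 0" using S0 by simp
  also have "(\<Sum>k<M. (if k = s then 1 else 0) * cnj (w k)) = cnj (w s)" using s by (simp add: if_distrib[where f="\<lambda>x. x * cnj (w _)"] cong: if_cong)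
  also have "cnj (w s) = 1 - (\<Sum>j<M. of_real ((cmod (c j))^2))"
  proof -
    have "cnj (w s) = 1 - (\<Sum>j<M. c j * cnj (c j))" by (simp add: w_def c_def)
    also have "(\<Sum>j<M. c j * cnj (c j)) = (\<Sum>j<M. of_real ((cmod (c j))^2))"
      by (intro sum.cong refl) (metis complex_norm_square)
    finally show ?thesis .
  qed
  finally have eq: "(\<Sum>k<M. w k * cnj (w k)) = 1 - (\<Sum>j<M. of_real ((cmod (c j))^2))" by simp
  have "0 \<le> (\<Sum>k<M. (cmod (w k))^2)" by (simp add: sum_nonneg)
  also have "(\<Sum>k<M. (cmod (w k))^2) = Re (\<Sum>k<M. w k * cnj (w k))"
    unfolding Re_sum by (intro sum.cong refl) (metis complex_norm_square Re_complex_of_real)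
  also have "\<dots> = 1 - (\<Sum>j<M. (cmod (c j))^2)" unfolding eq by (simp add: Re_sum)
  finally show ?thesis by (simp add: c_def)
qed

lemma R_even: "realrep U q (2*k) = (if even q then Re (U (q div 2) k) else Im (U (q div 2) k))"
  by (simp add: realrep_def Let_def)

lemma R_odd: "realrep U q (2*k+1) = (if even q then - Im (U (q div 2) k) else Re (U (q div 2) k))"
  by (simp add: realrep_def Let_def)

definition Gt :: "(nat\<Rightarrow>nat\<Rightarrow>complex) \<Rightarrow> real \<Rightarrow> nat \<Rightarrow> nat \<Rightarrow> nat \<Rightarrow> real" where
  "Gt U r q q' m = (exp(2*r)/2 - 1/2) * realrep U q (2*m) * realrep U q' (2*m)
     + (exp(-2*r)/2 - 1/2) * realrep U q (2*m+1) * realrep U q' (2*m+1)"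

lemma sum_div2: "(\<Sum>q<2*(M::nat). (g::nat\<Rightarrow>real) (q div 2)) = 2 * (\<Sum>k<M. g k)"
  by (simp add: sum_split2 sum_distrib_left)

lemma cov_formula:
  assumes "S \<subseteq> {..<M}"
  shows "cov_transform M (realrep U) (sq_input S r) q q'
     = (1/2) * (\<Sum>a<2*M. realrep U q a * realrep U q' a) + (\<Sum>m\<in>S. Gt U r q q' m)"
proof -
  let ?R = "realrep U"
  define e where "e a = (if a div 2 \<in> S then (if even a then exp(2*r)/2 - 1/2 else exp(-2*r)/2 - 1/2) else 0)" for a :: nat
  have diag: "sq_input S r a a = 1/2 + e a" for a by (simp add: sq_input_def e_def)
  have "cov_transform M ?R (sq_input S r) q q' = (\<Sum>a<2*M. ?R q a * sq_input S r a a * ?R q' a)"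
    unfolding cov_transform_def
  proof (intro sum.cong refl)
    fix a assume a: "a \<in> {..<2*M}"
    have "(\<Sum>b<2*M. ?R q a * sq_input S r a b * ?R q' b) = (\<Sum>b<2*M. if b = a then ?R q a * sq_input S r a a * ?R q' a else 0)"
      by (intro sum.cong refl) (simp add: sq_input_def)
    also have "\<dots> = ?R q a * sq_input S r a a * ?R q' a" using a by simp
    finally show "(\<Sum>b<2*M. ?R q a * sq_input S r a b * ?R q' b) = ?R q a * sq_input S r a a * ?R q' a" .
  qed
  also have "\<dots> = (1/2) * (\<Sum>a<2*M. ?R q a * ?R q' a) + (\<Sum>a<2*M. e a * ?R q a * ?R q' a)"
    unfolding diag by (simp add: algebra_simps sum.distrib sum_distrib_left)
  also have "(\<Sum>a<2*M. e a * ?R q a * ?R q' a) = (\<Sum>k<M. if k \<in> S then Gt U r q q' k else 0)"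
    unfolding sum_split2 by (intro sum.cong refl) (simp add: e_def Gt_def)
  also have "\<dots> = (\<Sum>m\<in>S. Gt U r q q' m)"
    using assms by (simp add: sum.inter_restrict[symmetric] Int_absorb1 inf.absorb2)
  finally show ?thesis .
qed

lemma orth:
  assumes U: "unitary_mat M U" and "q div 2 < M" "q' div 2 < M" "q div 2 \<noteq> q' div 2"
  shows "(\<Sum>a<2*M. realrep U q a * realrep U q' a) = 0"
proof -
  define z where "z = (\<Sum>k<M. U (q div 2) k * cnj (U (q' div 2) k))"
  have z: "z = 0" using U assms unfolding z_def unitary_mat_def by auto
  have "(\<Sum>a<2*M. realrep U q a * realrep U q' a) =
     (if even q then (if even q' then Re z else - Im z) else (if even q' then Im z else Re z))"
    unfolding sum_split2 R_even R_odd z_def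
    by (cases "even q"; cases "even q'") (simp_all add: Re_sum Im_sum algebra_simps sum_negf sum_subtractf)
  then show ?thesis using z by simp
qed

lemma abs_bound_aux:
  fixes p d x y z w A B :: real
  assumes "\<bar>x\<bar> \<le> A" "\<bar>z\<bar> \<le> A" "\<bar>y\<bar> \<le> B" "\<bar>w\<bar> \<le> B"
  shows "\<bar>p*x*y + d*z*w\<bar> \<le> (\<bar>p\<bar>+\<bar>d\<bar>)*A*B"
proof -
  have A0: "0 \<le> A" using assms(1) abs_ge_zero order_trans by blast
  have "\<bar>p*x*y\<bar> \<le> \<bar>p\<bar>*A*B"
    unfolding abs_mult by (intro mult_mono assms) (auto simp: A0)
  moreover have "\<bar>d*z*w\<bar> \<le> \<bar>d\<bar>*A*B"
    unfolding abs_mult by (intro mult_mono assms) (auto simp: A0)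
  ultimately show ?thesis by (smt (verit) distrib_right abs_triangle_ineq)
qed

lemma G_bound:
  "\<bar>Gt U r q q' m\<bar> \<le> (\<bar>exp(2*r)/2 - 1/2\<bar> + \<bar>exp(-2*r)/2 - 1/2\<bar>) * cmod (U (q div 2) m) * cmod (U (q' div 2) m)"
  unfolding Gt_def
  by (rule abs_bound_aux) (simp_all add: R_even R_odd[simplified] abs_Re_le_cmod abs_Im_le_cmod)

lemma final_arith:
  fixes e eta c F :: real and N :: nat
  assumes "0 \<le> eta" "0 < N" "F \<le> real N * c^2 * (real N * (8 * eta))" "c^2 \<le> e / 4"
  shows "F \<le> e * (real N)^4 * (eta + 2 * sqrt eta)^2"
proof -
  have N2: "(real N)^2 \<le> (real N)^4"
  proof -
    have "1 \<le> (real N)^2" using assms(2) by (simp add: one_le_power)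
    then have "(real N)^2 * 1 \<le> (real N)^2 * (real N)^2" by (intro mult_left_mono) auto
    then show ?thesis by (simp add: power_add[symmetric])
  qed
  have "0 \<le> c^2" by simp
  then have e0: "0 \<le> e" using assms(4) by linarith
  have "F \<le> (real N)^2 * 8 * eta * c^2" using assms(3) by (simp add: power2_eq_square algebra_simps)
  also have "\<dots> \<le> (real N)^2 * 8 * eta * (e/4)" using assms by (intro mult_left_mono) auto
  also have "\<dots> = e * (real N)^2 * (2 * eta)" by simp
  also have "\<dots> \<le> e * (real N)^4 * (4 * eta)"
    using N2 e0 assms(1) by (intro mult_mono) auto
  also have "4 * eta \<le> (eta + 2 * sqrt eta)^2"
  proof -
    have "(eta + 2 * sqrt eta)^2 = eta^2 + 4 * eta * sqrt eta + 4 * (sqrt eta)^2"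
      by (simp add: power2_eq_square algebra_simps)
    also have "(sqrt eta)^2 = eta" using assms(1) by simp
    finally show ?thesis using assms(1) by (simp add: add_nonneg_nonneg)
  qed
  then have "e * (real N)^4 * (4 * eta) \<le> e * (real N)^4 * (eta + 2 * sqrt eta)^2"
    using e0 by (intro mult_left_mono) auto
  finally show ?thesis .
qed

theorem lemma3:
  fixes M N :: nat and lat s :: "nat \<Rightarrow> nat" and r :: real
    and U :: "nat \<Rightarrow> nat \<Rightarrow> complex"
  assumes "0 < N" and "N dvd M"
    and "\<forall>j<M. lat j < N"
    and "\<forall>\<alpha><N. card {j. j < M \<and> lat j = \<alpha>} = M div N"
    and "\<forall>\<alpha><N. s \<alpha> < M \<and> lat (s \<alpha>) = \<alpha>"
    and "unitary_mat M U"
    and "r > 0"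
  shows "frob_sq M (\<lambda>q q'. exact_cov M N s r U q q' - approx_cov M lat s r U q q')
         \<le> exp (4*r) * (real N)^4 *
            (Max (leakage M lat s U ` {..<N}) + 2 * sqrt (Max (leakage M lat s U ` {..<N})))^2"
proof -
  note N0 = assms(1) and latN = assms(3) and sA = assms(5) and U = assms(6) and r0 = assms(7)
  define dp where "dp = exp(2*r)/2 - 1/2"
  define dm where "dm = exp(-2*r)/2 - 1/2"
  define c where "c = \<bar>dp\<bar> + \<bar>dm\<bar>"
  define f where "f \<alpha> j = (cmod (U j (s \<alpha>)))^2" for \<alpha> j
  define H where "H \<alpha> j j' = (if lat j = \<alpha> \<and> lat j' = \<alpha> then 0 else f \<alpha> j * f \<alpha> j')" for \<alpha> j j'
  define X where "X \<alpha> q q' = (if lat (q div 2) = \<alpha> \<and> lat (q' div 2) = \<alpha> then 0 else Gt U r q q' (s \<alpha>))" for \<alpha> q q'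
  define P where "P q q' = (\<Sum>a<2*M. realrep U q a * realrep U q' a)" for q q'
  define eta where "eta = Max (leakage M lat s U ` {..<N})"
  have inj: "inj_on s {..<N}"
    by (rule inj_onI) (metis lessThan_iff sA)
  have Ssub: "s ` {..<N} \<subseteq> {..<M}" using sA by auto
  have exact: "exact_cov M N s r U q q' = 1/2 * P q q' + (\<Sum>\<alpha><N. Gt U r q q' (s \<alpha>))" for q q'
    unfolding exact_cov_def cov_formula[OF Ssub] sum.reindex[OF inj] P_def by simp
  have D: "exact_cov M N s r U q q' - approx_cov M lat s r U q q' = (\<Sum>\<alpha><N. X \<alpha> q q')"
    if q: "q < 2*M" "q' < 2*M" for q q'
  proof (cases "lat (q div 2) = lat (q' div 2)")
    case True
    define \<beta> where "\<beta> = lat (q div 2)"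
    have \<beta>: "\<beta> < N" using latN q unfolding \<beta>_def by auto
    have ssub: "{s \<beta>} \<subseteq> {..<M}" using sA \<beta> by auto
    have appr: "approx_cov M lat s r U q q' = 1/2 * P q q' + Gt U r q q' (s \<beta>)"
      unfolding approx_cov_def using True cov_formula[OF ssub] by (simp add: \<beta>_def P_def)
    have "(\<Sum>\<alpha><N. X \<alpha> q q') = (\<Sum>\<alpha><N. Gt U r q q' (s \<alpha>) - (if \<alpha> = \<beta> then Gt U r q q' (s \<alpha>) else 0))"
      by (intro sum.cong refl) (auto simp: X_def \<beta>_def True)
    also have "\<dots> = (\<Sum>\<alpha><N. Gt U r q q' (s \<alpha>)) - Gt U r q q' (s \<beta>)"
      using \<beta> by (simp add: sum_subtractf)
    finally show ?thesis using exact appr by simp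
  next
    case False
    have "q div 2 \<noteq> q' div 2" using False by auto
    then have "P q q' = 0" unfolding P_def using q by (intro orth[OF U]) auto
    moreover have "approx_cov M lat s r U q q' = 0" using False by (simp add: approx_cov_def)
    moreover have "(\<Sum>\<alpha><N. X \<alpha> q q') = (\<Sum>\<alpha><N. Gt U r q q' (s \<alpha>))"
      using False by (intro sum.cong refl) (auto simp: X_def)
    ultimately show ?thesis using exact by simp
  qed
  have Xb: "(X \<alpha> q q')^2 \<le> c^2 * H \<alpha> (q div 2) (q' div 2)" for \<alpha> q q'
  proof (cases "lat (q div 2) = \<alpha> \<and> lat (q' div 2) = \<alpha>")
    case True then show ?thesis by (simp add: X_def H_def)
  next
    case False
    have "(X \<alpha> q q')^2 = \<bar>Gt U r q q' (s \<alpha>)\<bar>^2" unfolding X_def if_not_P[OF False] by simp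
    also have "\<dots> \<le> (c * cmod (U (q div 2) (s \<alpha>)) * cmod (U (q' div 2) (s \<alpha>)))^2"
      by (rule power_mono) (use G_bound[of U r q q' "s \<alpha>"] in \<open>simp_all add: c_def dp_def dm_def\<close>)
    also have "\<dots> = c^2 * H \<alpha> (q div 2) (q' div 2)"
      unfolding H_def f_def if_not_P[OF False] by (simp add: power_mult_distrib)
    finally show ?thesis .
  qed
  have Hsum: "(\<Sum>j<M. \<Sum>j'<M. H \<alpha> j j') \<le> 2 * leakage M lat s U \<alpha>" if \<alpha>: "\<alpha> < N" for \<alpha>
  proof -
    define T where "T = (\<Sum>j<M. f \<alpha> j)"
    define A where "A = (\<Sum>j<M. if lat j = \<alpha> then f \<alpha> j else 0)"
    define B where "B = (\<Sum>j<M. if lat j \<noteq> \<alpha> then f \<alpha> j else 0)"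
    have T1: "T \<le> 1" unfolding T_def f_def using bessel[OF U] sA \<alpha> by auto
    have TAB: "T = A + B" unfolding T_def A_def B_def by (simp add: sum.distrib[symmetric] if_distrib cong: if_cong) (intro sum.cong; auto)
    have A0: "0 \<le> A" unfolding A_def f_def by (intro sum_nonneg) auto
    have B0: "0 \<le> B" unfolding B_def f_def by (intro sum_nonneg) auto
    have "(\<Sum>j<M. \<Sum>j'<M. H \<alpha> j j') = (\<Sum>j<M. \<Sum>j'<M. f \<alpha> j * f \<alpha> j' -
        (if lat j = \<alpha> then f \<alpha> j else 0) * (if lat j' = \<alpha> then f \<alpha> j' else 0))"
      by (intro sum.cong refl) (simp add: H_def)
    also have "\<dots> = T * T - A * A"
      by (simp add: sum_subtractf T_def A_def sum_product)
    finally have HS: "(\<Sum>j<M. \<Sum>j'<M. H \<alpha> j j') = T * T - A * A" .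
    have "B = leakage M lat s U \<alpha>"
    proof -
      have "{j. j < M \<and> lat j \<noteq> \<alpha>} = {..<M} \<inter> {j. lat j \<noteq> \<alpha>}" by auto
      then show ?thesis unfolding leakage_def B_def f_def
        by (simp add: sum.inter_restrict)
    qed
    moreover have "T * T - A * A \<le> 2 * B"
    proof -
      have "T * T - A * A = B * (2 * A + B)" using TAB by (simp add: algebra_simps)
      also have "\<dots> \<le> B * 2" using B0 A0 T1 TAB by (intro mult_left_mono) auto
      finally show ?thesis by simp
    qed
    ultimately show ?thesis using HS by simp
  qed
  have eta0: "0 \<le> eta"
  proof -
    have "leakage M lat s U 0 \<le> eta" unfolding eta_def using N0 by (intro Max_ge) auto
    moreover have "0 \<le> leakage M lat s U 0" unfolding leakage_def by (intro sum_nonneg) auto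
    ultimately show ?thesis by simp
  qed
  have leta: "leakage M lat s U \<alpha> \<le> eta" if "\<alpha> < N" for \<alpha>
    unfolding eta_def using that by (intro Max_ge) auto
  have c2: "c^2 \<le> exp (4*r) / 4"
  proof -
    have e1: "1 \<le> exp (2*r)" using r0 by simp
    have e2: "exp (-2*r) \<le> 1" "0 < exp (-2*r)" using r0 by auto
    have "c = exp(2*r)/2 - exp(-2*r)/2" unfolding c_def dp_def dm_def using e1 e2 by auto
    then have "0 \<le> c" "c \<le> exp(2*r)/2" using e1 e2 by auto
    then have "c^2 \<le> (exp(2*r)/2)^2" by (intro power_mono) auto
    also have "\<dots> = exp (4*r) / 4" by (simp add: power2_eq_square exp_add[symmetric])
    finally show ?thesis .
  qed
  have "frob_sq M (\<lambda>q q'. exact_cov M N s r U q q' - approx_cov M lat s r U q q')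
        = (\<Sum>q<2*M. \<Sum>q'<2*M. (\<Sum>\<alpha><N. X \<alpha> q q')^2)"
    unfolding frob_sq_def by (intro sum.cong refl) (simp add: D)
  also have "\<dots> \<le> (\<Sum>q<2*M. \<Sum>q'<2*M. real N * (\<Sum>\<alpha><N. c^2 * H \<alpha> (q div 2) (q' div 2)))"
  proof (intro sum_mono)
    fix q q'
    have "(\<Sum>\<alpha><N. X \<alpha> q q')^2 \<le> (\<Sum>\<alpha><N. (X \<alpha> q q')^2) * card {..<N}"
      by (rule sum_squared_le_sum_of_squares)
    also have "\<dots> \<le> (\<Sum>\<alpha><N. c^2 * H \<alpha> (q div 2) (q' div 2)) * card {..<N}"
      by (intro mult_right_mono sum_mono Xb) auto
    finally show "(\<Sum>\<alpha><N. X \<alpha> q q')^2 \<le> real N * (\<Sum>\<alpha><N. c^2 * H \<alpha> (q div 2) (q' div 2))"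
      by (simp add: mult.commute)
  qed
  also have "\<dots> = real N * c^2 * (\<Sum>q<2*M. \<Sum>q'<2*M. \<Sum>\<alpha><N. H \<alpha> (q div 2) (q' div 2))"
    by (simp only: sum_distrib_left mult.assoc)
  also have "\<dots> \<le> real N * c^2 * (real N * (8 * eta))"
  proof (rule mult_left_mono)
    show "0 \<le> real N * c^2" by simp
    have "(\<Sum>q<2*M. \<Sum>q'<2*M. \<Sum>\<alpha><N. H \<alpha> (q div 2) (q' div 2))
        = (\<Sum>q<2*M. \<Sum>\<alpha><N. \<Sum>q'<2*M. H \<alpha> (q div 2) (q' div 2))"
      by (rule sum.cong[OF refl], rule sum.swap)
    also have "\<dots> = (\<Sum>\<alpha><N. \<Sum>q<2*M. \<Sum>q'<2*M. H \<alpha> (q div 2) (q' div 2))"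
      by (rule sum.swap)
    also have "\<dots> = (\<Sum>\<alpha><N. 4 * (\<Sum>j<M. \<Sum>j'<M. H \<alpha> j j'))"
    proof (intro sum.cong refl)
      fix \<alpha>
      have "(\<Sum>q<2*M. \<Sum>q'<2*M. H \<alpha> (q div 2) (q' div 2)) = (\<Sum>q<2*M. 2 * (\<Sum>j'<M. H \<alpha> (q div 2) j'))"
        by (intro sum.cong refl) (rule sum_div2)
      also have "\<dots> = 2 * (\<Sum>j<M. 2 * (\<Sum>j'<M. H \<alpha> j j'))"
        by (rule sum_div2)
      finally show "(\<Sum>q<2*M. \<Sum>q'<2*M. H \<alpha> (q div 2) (q' div 2)) = 4 * (\<Sum>j<M. \<Sum>j'<M. H \<alpha> j j')"
        by (simp add: sum_distrib_left)
    qed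
    also have "\<dots> \<le> (\<Sum>\<alpha><N. 8 * eta)"
    proof (intro sum_mono)
      fix \<alpha> assume "\<alpha> \<in> {..<N}"
      then have "\<alpha> < N" by simp
      then show "4 * (\<Sum>j<M. \<Sum>j'<M. H \<alpha> j j') \<le> 8 * eta" using Hsum leta by fastforce
    qed
    also have "(\<Sum>\<alpha><N. 8 * eta) = real N * (8 * eta)" by simp
    finally show "(\<Sum>q<2*M. \<Sum>q'<2*M. \<Sum>\<alpha><N. H \<alpha> (q div 2) (q' div 2)) \<le> real N * (8 * eta)" .
  qed
  finally have "frob_sq M (\<lambda>q q'. exact_cov M N s r U q q' - approx_cov M lat s r U q q')
      \<le> real N * c^2 * (real N * (8 * eta))" .
  then show ?thesis unfolding eta_def[symmetric]
    by (rule final_arith[OF eta0 N0 _ c2])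
qed

end
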